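(* Let $0<k\le16/(3\sqrt3)$, and let $t_1(k)\le t_2(k)$ be the real zeros of $8t^3-8t+k$ in the interval $(0,1)$ (they coincide, equal to $1/\sqrt3$, when $k=16/(3\sqrt3)$). For $x=e^{i\theta}$ on the unit circle with $\cos\theta\neq 0$ set $$y_{1}(x)=\frac{k+\sqrt{k^2-16\cos^2\theta\,(3-4\cos^2\theta)}}{4\cos\theta},\qquad y_{2}(x)=\frac{k-\sqrt{k^2-16\cos^2\theta\,(3-4\cos^2\theta)}}{4\cos\theta}.$$ Then: if $|\cos\theta|=t_1(k)$ then $|y_2(x)|=1$; and if $|\cos\theta|=t_2(k)$ then $|y_1(x)|=1$ when $0<k\le2\sqrt2$, and $|y_2(x)|=1$ when $2\sqrt2\le k\le16/(3\sqrt3)$.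
   Context: $y_1(x),y_2(x)$ are the two roots in $y$ of $(x+x^{-1})y^2-ky-(x^3+x^{-3})=0$ (which equals $-y^3R_k(x/y,1/(xy))$ for $R_k(x,y)=y^3-y+x^3-x+kxy$). Here $\sqrt{\cdot}$ is the principal square root. For $0<k<16/(3\sqrt3)$ the cubic $8t^3-8t+k$ has exactly two zeros in $(0,1)$, with $t_1(k)<1/\sqrt3<t_2(k)$. *)

theory Defs
  imports "HOL-Analysis.Analysis"
begin

definition cubic_zeros :: "real \<Rightarrow> real set" where
  "cubic_zeros k = {t. 0 < t \<and> t < 1 \<and> 8*t^3 - 8*t + k = 0}"

definition t1 :: "real \<Rightarrow> real" where
  "t1 k = Min (cubic_zeros k)"

definition t2 :: "real \<Rightarrow> real" where
  "t2 k = Max (cubic_zeros k)"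

text \<open>The two roots y_1, y_2 at x = e^(i theta), with the principal (complex) square root.\<close>
definition y1 :: "real \<Rightarrow> real \<Rightarrow> complex" where
  "y1 k \<theta> = (complex_of_real k + csqrt (complex_of_real (k^2 - 16*(cos \<theta>)^2*(3 - 4*(cos \<theta>)^2))))
              / complex_of_real (4 * cos \<theta>)"

definition y2 :: "real \<Rightarrow> real \<Rightarrow> complex" where
  "y2 k \<theta> = (complex_of_real k - csqrt (complex_of_real (k^2 - 16*(cos \<theta>)^2*(3 - 4*(cos \<theta>)^2))))
              / complex_of_real (4 * cos \<theta>)"

end

theory Submission
  imports Defs
begin

lemma D_eq:
  fixes c k t :: real
  assumes "8*t^3-8*t+k=0" "\<bar>c\<bar> = t"
  shows "k^2 - 16*c^2*(3-4*c^2) = (4*t*(2*t^2-1))^2"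
proof -
  have c2: "c^2 = t^2" using assms(2) by (metis power2_abs)
  have k: "k = 8*t - 8*t^3" using assms(1) by simp
  show ?thesis unfolding k c2 by (simp add: algebra_simps power2_eq_square power3_eq_cube)
qed

lemma csq:
  fixes c k t :: real
  assumes "8*t^3-8*t+k=0" "\<bar>c\<bar> = t" "0 < t"
  shows "csqrt (complex_of_real (k^2 - 16*c^2*(3-4*c^2))) = complex_of_real (4*t*\<bar>2*t^2-1\<bar>)"
proof -
  have "k^2 - 16*c^2*(3-4*c^2) = (4*t*\<bar>2*t^2-1\<bar>)^2" using D_eq[OF assms(1,2)]
    by (simp add: power_mult_distrib)
  moreover have "0 \<le> 4*t*\<bar>2*t^2-1\<bar>" using assms(3) by simp
  ultimately show ?thesis
    using csqrt_of_real[of "k^2 - 16*c^2*(3-4*c^2)"] by simp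
qed

lemma mod_plus:
  fixes c k t :: real
  assumes "8*t^3-8*t+k=0" "\<bar>c\<bar> = t" "0 < t"
  shows "cmod ((complex_of_real k + csqrt (complex_of_real (k^2 - 16*c^2*(3-4*c^2)))) / complex_of_real (4*c))
     = \<bar>2 - 2*t^2 + \<bar>2*t^2-1\<bar>\<bar>"
proof -
  have k: "k = 8*t - 8*t^3" using assms(1) by simp
  have c: "c \<noteq> 0" using assms by auto
  have "(complex_of_real k + csqrt (complex_of_real (k^2 - 16*c^2*(3-4*c^2)))) / complex_of_real (4*c)
     = complex_of_real ((k + 4*t*\<bar>2*t^2-1\<bar>)/(4*c))" by (subst csq[OF assms]) (simp only: of_real_add of_real_diff of_real_divide)
  hence "cmod ((complex_of_real k + csqrt (complex_of_real (k^2 - 16*c^2*(3-4*c^2)))) / complex_of_real (4*c))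
     = \<bar>(k + 4*t*\<bar>2*t^2-1\<bar>)/(4*c)\<bar>" by (simp only: norm_of_real)
  also have "\<dots> = \<bar>(k + 4*t*\<bar>2*t^2-1\<bar>)/(4*t)\<bar>" using assms(2) by (simp add: abs_divide abs_mult)
  also have "(k + 4*t*\<bar>2*t^2-1\<bar>)/(4*t) = 2 - 2*t^2 + \<bar>2*t^2-1\<bar>"
  proof -
    have "k + 4*t*\<bar>2*t^2-1\<bar> = (4*t)*(2 - 2*t^2 + \<bar>2*t^2-1\<bar>)"
      unfolding k by (simp add: algebra_simps power2_eq_square power3_eq_cube)
    thus ?thesis using assms(3) by simp
  qed
  finally show ?thesis .
qed

lemma mod_minus:
  fixes c k t :: real
  assumes "8*t^3-8*t+k=0" "\<bar>c\<bar> = t" "0 < t"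
  shows "cmod ((complex_of_real k - csqrt (complex_of_real (k^2 - 16*c^2*(3-4*c^2)))) / complex_of_real (4*c))
     = \<bar>2 - 2*t^2 - \<bar>2*t^2-1\<bar>\<bar>"
proof -
  have k: "k = 8*t - 8*t^3" using assms(1) by simp
  have c: "c \<noteq> 0" using assms by auto
  have "(complex_of_real k - csqrt (complex_of_real (k^2 - 16*c^2*(3-4*c^2)))) / complex_of_real (4*c)
     = complex_of_real ((k - 4*t*\<bar>2*t^2-1\<bar>)/(4*c))" by (subst csq[OF assms]) (simp only: of_real_add of_real_diff of_real_divide)
  hence "cmod ((complex_of_real k - csqrt (complex_of_real (k^2 - 16*c^2*(3-4*c^2)))) / complex_of_real (4*c))
     = \<bar>(k - 4*t*\<bar>2*t^2-1\<bar>)/(4*c)\<bar>" by (simp only: norm_of_real)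
  also have "\<dots> = \<bar>(k - 4*t*\<bar>2*t^2-1\<bar>)/(4*t)\<bar>" using assms(2) by (simp add: abs_divide abs_mult)
  also have "(k - 4*t*\<bar>2*t^2-1\<bar>)/(4*t) = 2 - 2*t^2 - \<bar>2*t^2-1\<bar>"
  proof -
    have "k - 4*t*\<bar>2*t^2-1\<bar> = (4*t)*(2 - 2*t^2 - \<bar>2*t^2-1\<bar>)"
      unfolding k by (simp add: algebra_simps power2_eq_square power3_eq_cube)
    thus ?thesis using assms(3) by simp
  qed
  finally show ?thesis .
qed

lemma finite_zeros: "finite (cubic_zeros k)"
proof -
  have "cubic_zeros k \<subseteq> {t. poly [:k, -8, 0, 8:] t = 0}"
    unfolding cubic_zeros_def by (auto simp: algebra_simps power3_eq_cube)
  moreover have "finite {t. poly [:k, -8, 0, 8:] t = (0::real)}"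
    by (rule poly_roots_finite) simp
  ultimately show ?thesis by (rule finite_subset)
qed

lemma ivt_zero:
  fixes a b k :: real
  assumes "a < b" "8*a^3-8*a+k \<le> 0" "8*b^3-8*b+k > 0"
  shows "\<exists>t. a \<le> t \<and> t < b \<and> 8*t^3-8*t+k = 0"
proof -
  have "\<exists>t\<ge>a. t \<le> b \<and> 8*t^3-8*t+k = 0"
    using IVT[of "\<lambda>t. 8*t^3-8*t+k" a 0 b] assms by (auto intro!: continuous_intros)
  then obtain t where "a \<le> t" "t \<le> b" "8*t^3-8*t+k = 0" by blast
  moreover have "t \<noteq> b" using assms calculation by auto
  ultimately show ?thesis by auto
qed

lemma ivt_zero2:
  fixes a b k :: real
  assumes "a < b" "8*a^3-8*a+k > 0" "8*b^3-8*b+k \<le> 0"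
  shows "\<exists>t. a < t \<and> t \<le> b \<and> 8*t^3-8*t+k = 0"
proof -
  have "\<exists>t\<ge>a. t \<le> b \<and> 8*t^3-8*t+k = 0"
    using IVT2[of "\<lambda>t. 8*t^3-8*t+k" b 0 a] assms by (auto intro!: continuous_intros)
  then obtain t where "a \<le> t" "t \<le> b" "8*t^3-8*t+k = 0" by blast
  moreover have "t \<noteq> a" using assms calculation by auto
  ultimately show ?thesis by (intro exI[of _ t]) auto
qed

theorem lemma4:
  fixes k \<theta> :: real
  assumes "0 < k" and "k \<le> 16 / (3 * sqrt 3)" and "cos \<theta> \<noteq> 0"
  shows "(\<bar>cos \<theta>\<bar> = t1 k \<longrightarrow> cmod (y2 k \<theta>) = 1)
       \<and> (\<bar>cos \<theta>\<bar> = t2 k \<longrightarrow>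
            (k \<le> 2 * sqrt 2 \<longrightarrow> cmod (y1 k \<theta>) = 1)
          \<and> (2 * sqrt 2 \<le> k \<longrightarrow> cmod (y2 k \<theta>) = 1))"
proof -
  define S where "S = cubic_zeros k"
  define a where "a = sqrt 3 / 3"
  define b where "b = sqrt 2 / 2"
  have a0: "0 < a" unfolding a_def by simp
  have a2: "a^2 = 1/3" unfolding a_def by (simp add: power_divide)
  have a1: "a < 1"
  proof (rule ccontr)
    assume "\<not> a < 1"
    hence "1*1 \<le> a*a" by (intro mult_mono) auto
    thus False using a2 by (simp add: power2_eq_square)
  qed
  have ak: "16 / (3 * sqrt 3) = 16 * a / 3"
    unfolding a_def by (simp add: field_simps)
  have b0: "0 < b" unfolding b_def by simp
  have b2: "b^2 = 1/2" unfolding b_def by (simp add: power_divide)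
  have b1: "b < 1"
  proof (rule ccontr)
    assume "\<not> b < 1"
    hence "1*1 \<le> b*b" by (intro mult_mono) auto
    thus False using b2 by (simp add: power2_eq_square)
  qed
  have bk: "2 * sqrt 2 = 4 * b" unfolding b_def by simp
  have fin: "finite S" unfolding S_def by (rule finite_zeros)
  have fa: "8*a^3 - 8*a + k \<le> 0"
  proof -
    have "a^3 = a * a^2" by (simp add: power3_eq_cube power2_eq_square)
    hence "8*a^3 - 8*a = - 16*a/3" using a2 by simp
    thus ?thesis using assms(2) ak by linarith
  qed
  obtain z where z: "0 < z" "z \<le> a" "8*z^3-8*z+k = 0"
    using ivt_zero2[of 0 a k] a0 fa assms(1) by auto
  have zS: "z \<in> S" unfolding S_def cubic_zeros_def using z a1 by auto
  have ne: "S \<noteq> {}" using zS by auto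
  have t1S: "t1 k \<in> S" unfolding t1_def S_def[symmetric] using fin ne by simp
  have t1le: "t1 k \<le> a" unfolding t1_def S_def[symmetric] using fin zS z(2)
    by (meson Min_le order_trans)
  have t2S: "t2 k \<in> S" unfolding t2_def S_def[symmetric] using fin ne by simp
  show ?thesis
  proof (intro conjI impI)
    assume h: "\<bar>cos \<theta>\<bar> = t1 k"
    let ?t = "t1 k"
    have t: "0 < ?t" "8*?t^3-8*?t+k = 0" using t1S unfolding S_def cubic_zeros_def by auto
    have "?t^2 \<le> a^2" using t1le t(1) by (simp add: power_mono)
    hence "\<bar>2*?t^2-1\<bar> = 1 - 2*?t^2" using a2 by simp
    thus "cmod (y2 k \<theta>) = 1" unfolding y2_def using mod_minus[OF t(2) h t(1)] by simp
  next
    assume h: "\<bar>cos \<theta>\<bar> = t2 k" "k \<le> 2 * sqrt 2"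
    let ?t = "t2 k"
    have t: "0 < ?t" "8*?t^3-8*?t+k = 0" using t2S unfolding S_def cubic_zeros_def by auto
    have fb: "8*b^3 - 8*b + k \<le> 0"
    proof -
      have "b^3 = b * b^2" by (simp add: power3_eq_cube power2_eq_square)
      hence "8*b^3 - 8*b = - 4*b" using b2 by simp
      thus ?thesis using h(2) bk by linarith
    qed
    obtain w where w: "b \<le> w" "w < 1" "8*w^3-8*w+k = 0"
      using ivt_zero[of b 1 k] b1 fb assms(1) by auto
    have wS: "w \<in> S" unfolding S_def cubic_zeros_def using w b0 by auto
    have "w \<le> ?t" unfolding t2_def S_def[symmetric] using fin wS by simp
    hence "b^2 \<le> ?t^2" using w b0 by (simp add: power_mono)
    hence "\<bar>2*?t^2-1\<bar> = 2*?t^2 - 1" using b2 by simp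
    thus "cmod (y1 k \<theta>) = 1" unfolding y1_def using mod_plus[OF t(2) h(1) t(1)] by simp
  next
    assume h: "\<bar>cos \<theta>\<bar> = t2 k" "2 * sqrt 2 \<le> k"
    let ?t = "t2 k"
    have t: "0 < ?t" "?t < 1" "8*?t^3-8*?t+k = 0" using t2S unfolding S_def cubic_zeros_def by auto
    have "?t^2 \<le> 1/2"
    proof (rule ccontr)
      assume "\<not> ?t^2 \<le> 1/2"
      hence g: "?t^2 > 1/2" by simp
      hence "b < ?t" using b2 t(1) b0
        by (metis power_mono linorder_not_le less_le_not_le)
      moreover have "?t^2 + b*?t - 1/2 > 0" using g b0 t(1) by (smt (verit) mult_pos_pos)
      ultimately have "(?t - b) * (?t^2 + b*?t - 1/2) > 0" by simp
      moreover have "-8 * ((?t - b) * (?t^2 + b*?t - 1/2)) = -8*?t^3 + 4*?t + 8*b^2*?t - 4*b"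
        by (simp add: field_simps power2_eq_square power3_eq_cube)
      hence "8*?t - 8*?t^3 - 4*b = -8 * ((?t - b) * (?t^2 + b*?t - 1/2))"
        using b2 by simp
      ultimately show False using t(3) h(2) bk by linarith
    qed
    hence "\<bar>2*?t^2-1\<bar> = 1 - 2*?t^2" by simp
    thus "cmod (y2 k \<theta>) = 1" unfolding y2_def using mod_minus[OF t(3) h(1) t(1)] by simp
  qed
qed

end
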